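(* Under the assumptions below, with $\varrho=h^{2\alpha}$, let $y_{\varrho h}\in Y_h$ be the Galerkin solution, let $\widetilde{u}_{\varrho h}\in U_h$ be the unique solution of $\langle\widetilde{u}_{\varrho h},x_h\rangle_{X^*,X}=\langle By_{\varrho h},x_h\rangle_{X^*,X}$ for all $x_h\in X_h$, and let $\widetilde{y}_\varrho:=B^{-1}\widetilde{u}_{\varrho h}\in Y$. Then there is a constant $c>0$ independent of $h$ and $\overline{y}$ such that $$\|\widetilde{y}_\varrho-\overline{y}\|_{H_Y}\le c\,\|\overline{y}\|_{H_Y}\quad\text{for }\overline{y}\in H_Y,\qquad \|\widetilde{y}_\varrho-\overline{y}\|_{H_Y}\le c\,h^\alpha\|\overline{y}\|_Y\quad\text{for }\overline{y}\in Y.$$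
   Context: Abstract setting: Let $X\subset H_X\subset X^*$ and $Y\subset H_Y\subset Y^*$ be Gelfand triples of real Hilbert spaces, where the duality pairings $\langle\cdot,\cdot\rangle_{X^*,X}$ and $\langle\cdot,\cdot\rangle_{Y^*,Y}$ extend the inner products of $H_X$, $H_Y$. Let $B:Y\to X^*$ be a bounded linear isomorphism with adjoint $B^*:X\to Y^*$, $\langle By,x\rangle_{X^*,X}=\langle y,B^*x\rangle_{Y,Y^*}$. Let $D:Y\to Y^*$ be bounded, linear, self-adjoint and elliptic, $\|y\|_D:=\langle Dy,y\rangle_{Y^*,Y}^{1/2}$ (an equivalent norm on $Y$). Given $\overline{y}\in H_Y$ and $\varrho>0$, $y_\varrho\in Y$ is the unique solution of $\langle y_\varrho,y\rangle_{H_Y}+\varrho\langle Dy_\varrho,y\rangle_{Y^*,Y}=\langle\overline{y},y\rangle_{H_Y}$ for all $y\in Y$. Discretization: for each $h\in(0,h_0]$, $Y_h\subset Y$ is finite-dimensional and there are maps $P_h:Y\to Y_h$, $\alpha>0$ and $c_1,c_2>0$ independent of $h$ with $\|y-P_hy\|_{H_Y}\le c_1h^\alpha\|y\|_D$ and $\|y-P_hy\|_D\le c_2\|y\|_D$ for all $y\in Y$; $y_{\varrho h}\in Y_h$ satisfies $\langle y_{\varrho h},y_h\rangle_{H_Y}+\varrho\langle Dy_{\varrho h},y_h\rangle_{Y^*,Y}=\langle\overline{y},y_h\rangle_{H_Y}$ for all $y_h\in Y_h$. Further, $U_h\subset X^*$ and $X_h\subset X$ are finite-dimensional subspaces with $\dim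 U_h=\dim X_h$, satisfying the discrete inf-sup condition $c_S\|u_h\|_{X^*}\le\sup_{0\ne x_h\in X_h}\langle u_h,x_h\rangle_{X^*,X}/\|x_h\|_X$ for all $u_h\in U_h$ with $c_S>0$ independent of $h$, and there are maps $\Pi_h:X\to X_h$ with $\|x-\Pi_hx\|_X\le c\,h^\alpha\|B^*x\|_{H_Y}$ for all $x\in X$ with $B^*x\in H_Y$, $c$ independent of $h$. *)

theory Defs
  imports "HOL-Analysis.Analysis"
begin

text \<open>Continuous, injective, dense embedding of a Hilbert space V into a pivot
  Hilbert space H (first half of a Gelfand triple V \<subseteq> H \<subseteq> V*; the dual V*
  is modelled as the space of bounded linear functionals V \<Rightarrow>L real, and the
  element h of H acts on V by the functional v \<mapsto> inner h (J v)).\<close>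
definition gelfand_embedding :: "('v::real_normed_vector \<Rightarrow> 'h::real_inner) \<Rightarrow> bool" where
  "gelfand_embedding J \<longleftrightarrow> bounded_linear J \<and> inj J \<and> closure (range J) = UNIV"

definition fd_subspace :: "'a::real_vector set \<Rightarrow> bool" where
  "fd_subspace S \<longleftrightarrow> subspace S \<and> (\<exists>A. finite A \<and> S = span A)"

definition Dnorm :: "('y::real_normed_vector \<Rightarrow> 'y \<Rightarrow>\<^sub>L real) \<Rightarrow> 'y \<Rightarrow> real" where
  "Dnorm D y = sqrt (blinfun_apply (D y) y)"

end

theory Submission
  imports Defs
begin

lemma riesz_rep:
  fixes f :: "'a::{real_inner,complete_space} \<Rightarrow> real"
  assumes f: "bounded_linear f"
  shows "\<exists>r. \<forall>x. f x = inner r x"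
proof (cases "\<forall>x. f x = 0")
  case True then show ?thesis by (auto intro: exI[of _ 0])
next
  case False
  then obtain x0 where x0: "f x0 \<noteq> 0" by auto
  interpret f: bounded_linear f by fact
  obtain K where K: "\<And>x. norm (f x) \<le> norm x * K" and Kpos: "K>0"
    using f.pos_bounded by blast
  define S where "S = f ` {x. norm x \<le> 1}"
  define M where "M = Sup S"
  have bdd: "bdd_above S" unfolding S_def bdd_above_def
  proof (intro exI ballI)
    fix y assume "y \<in> f ` {x. norm x \<le> 1}"
    then obtain x where "norm x \<le> 1" "y = f x" by auto
    moreover have "norm x * K \<le> 1 * K" by (rule mult_right_mono) (use \<open>norm x \<le> 1\<close> Kpos in auto)
    ultimately show "y \<le> K" using K[of x] by auto
  qed
  have S_ne: "S \<noteq> {}" unfolding S_def by (auto intro!: exI[of _ 0])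
  have fle: "\<And>x. norm x \<le> 1 \<Longrightarrow> f x \<le> M"
    unfolding M_def using bdd by (auto intro!: cSup_upper simp: S_def)
  have fleM: "\<And>x. f x \<le> M * norm x"
  proof -
    fix x
    show "f x \<le> M * norm x"
    proof (cases "x = 0")
      case True then show ?thesis by (simp add: f.zero)
    next
      case False
      have "f (scaleR (1 / norm x) x) \<le> M" by (rule fle) (simp add: False)
      then have "f x / norm x \<le> M" by (simp add: f.scaleR)
      then show ?thesis using False by (simp add: divide_le_eq mult.commute)
    qed
  qed
  define x1 where "x1 = (if f x0 > 0 then x0 else - x0)"
  have "f x1 > 0" using x0 by (auto simp: x1_def f.neg)
  have Mpos: "M > 0"
  proof (rule ccontr)
    assume "\<not> M > 0"
    then have "M * norm x1 \<le> 0" by (simp add: mult_nonpos_nonneg)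
    then show False using fleM[of x1] \<open>f x1 > 0\<close> by linarith
  qed
  have approx: "\<And>e. e>0 \<Longrightarrow> \<exists>x. norm x \<le> 1 \<and> f x > M - e"
  proof -
    fix e :: real assume "e > 0"
    then have "M - e < Sup S" unfolding M_def by simp
    from less_cSupD[OF S_ne this] show "\<exists>x. norm x \<le> 1 \<and> f x > M - e"
      unfolding S_def by auto
  qed
  have "\<forall>n. \<exists>x. norm x \<le> 1 \<and> f x > M - 1 / real (Suc n)"
    using approx by simp
  then obtain xs where xs: "\<And>n. norm (xs n) \<le> 1" "\<And>n. f (xs n) > M - 1 / real (Suc n)"
    by metis
  have key: "(norm (xs m - xs n))\<^sup>2 \<le> 4 * (1 / real (Suc m) + 1 / real (Suc n)) / M" for m n
  proof -
    define a where "a = xs m"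
    define b where "b = xs n"
    define d where "d = 1 / real (Suc m) + 1 / real (Suc n)"
    have d0: "d \<ge> 0" unfolding d_def by simp
    have na: "norm a \<le> 1" "norm b \<le> 1" using xs unfolding a_def b_def by auto
    have par: "(norm (a - b))\<^sup>2 + (norm (a + b))\<^sup>2 = 2 * (norm a)\<^sup>2 + 2 * (norm b)\<^sup>2"
      by (simp add: power2_norm_eq_inner inner_add_left inner_add_right inner_diff_left inner_diff_right inner_commute)
    have "f (a + b) > 2 * M - d" using xs(2)[of m] xs(2)[of n] unfolding a_def b_def d_def
      by (simp add: f.add)
    with fleM[of "a+b"] have sb: "M * norm (a + b) > 2 * M - d" by simp
    have sq: "(norm a)\<^sup>2 \<le> 1" "(norm b)\<^sup>2 \<le> 1" using na by (auto simp: power_le_one)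
    show ?thesis
    proof (cases "2 - d / M \<le> 0")
      case True
      then have "4 * d / M \<ge> 8" using Mpos by (simp add: field_simps)
      moreover have "(norm (a - b))\<^sup>2 \<le> 4" using par sq zero_le_power2[of "norm (a+b)"] by linarith
      ultimately show ?thesis unfolding a_def b_def d_def by simp
    next
      case False
      have "norm (a + b) > 2 - d / M" using sb Mpos by (simp add: field_simps)
      then have "(norm (a + b))\<^sup>2 \<ge> (2 - d / M)\<^sup>2" using False
        by (intro power_mono) auto
      moreover have "(2 - d / M)\<^sup>2 \<ge> 4 - 4 * d / M"
      proof -
        have "\<And>q::real. (2 - q)\<^sup>2 \<ge> 4 - 4 * q" by (simp add: power2_eq_square algebra_simps)
        from this[of "d / M"] show ?thesis by simp
      qed
      ultimately have "(norm (a - b))\<^sup>2 \<le> 4 * d / M" using par sq by linarith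
      then show ?thesis unfolding a_def b_def d_def by simp
    qed
  qed
  have cauchy: "Cauchy xs"
  proof (rule CauchyI)
    fix e :: real assume e: "e > 0"
    obtain N where N: "8 / (M * e\<^sup>2) < real N" using reals_Archimedean2 by blast
    have "\<forall>m\<ge>N. \<forall>n\<ge>N. norm (xs m - xs n) < e"
    proof (intro allI impI)
      fix m n assume mn: "m \<ge> N" "n \<ge> N"
      have "1 / real (Suc m) \<le> 1 / real (Suc N)" "1 / real (Suc n) \<le> 1 / real (Suc N)"
        using mn by (auto simp: frac_le)
      then have "4 * (1 / real (Suc m) + 1 / real (Suc n)) \<le> 8 * (1 / real (Suc N))"
        by (smt (verit))
      then have "4 * (1 / real (Suc m) + 1 / real (Suc n)) / M \<le> 8 * (1 / real (Suc N)) / M"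
        using Mpos by (intro divide_right_mono) simp_all
      also have "\<dots> = 8 / (real (Suc N) * M)" by simp
      also have "\<dots> < e\<^sup>2"
      proof -
        have Me: "M * e\<^sup>2 > 0" using Mpos e by simp
        have "8 / (M * e\<^sup>2) < real (Suc N)" using N by simp
        then have "8 < real (Suc N) * (M * e\<^sup>2)" using Me by (simp add: pos_divide_less_eq)
        then have "8 < e\<^sup>2 * (real (Suc N) * M)" by (simp add: mult_ac)
        moreover have "real (Suc N) * M > 0" using Mpos by simp
        ultimately show ?thesis by (simp add: pos_divide_less_eq)
      qed
      finally have "(norm (xs m - xs n))\<^sup>2 < e\<^sup>2" using key[of m n] by linarith
      then show "norm (xs m - xs n) < e" using e by (simp add: power_less_imp_less_base)
    qed
    then show "\<exists>M. \<forall>m\<ge>M. \<forall>n\<ge>M. norm (xs m - xs n) < e" by blast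
  qed
  then obtain xstar where lim: "xs \<longlonglongrightarrow> xstar"
    using Cauchy_convergent convergent_def by blast
  have "norm xstar \<le> 1"
    using tendsto_norm[OF lim] xs(1) by (auto intro: LIMSEQ_le_const2)
  have flim: "(\<lambda>n. f (xs n)) \<longlonglongrightarrow> f xstar" using f.tendsto[OF lim] .
  have lim2: "(\<lambda>n. M - 1 / real (Suc n)) \<longlonglongrightarrow> M"
    using tendsto_diff[OF tendsto_const[of M] LIMSEQ_Suc[OF lim_inverse_n']]
    by simp
  have "M \<le> f xstar"
    using LIMSEQ_le[OF lim2 flim] xs(2) by (meson less_imp_le)
  moreover have "f xstar \<le> M" using fle \<open>norm xstar \<le> 1\<close> by blast
  ultimately have fx: "f xstar = M" by simp
  have n1: "norm xstar = 1"
    using fleM[of xstar] fx Mpos \<open>norm xstar \<le> 1\<close> by simp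
  have ii: "inner xstar xstar = 1" using n1 by (simp add: power2_norm_eq_inner[symmetric])
  have le: "f u \<le> 0" if u: "inner xstar u = 0" for u
  proof (rule ccontr)
    assume "\<not> f u \<le> 0"
    then have fu: "f u > 0" by simp
    then have "u \<noteq> 0" using f.zero by auto
    then have nu: "(norm u)\<^sup>2 > 0" by simp
    define t where "t = f u / (M * (norm u)\<^sup>2)"
    define a where "a = t * f u"
    have a0: "a > 0" unfolding a_def t_def using fu Mpos nu by simp
    have Ma: "M * a = (f u)\<^sup>2 / (norm u)\<^sup>2" unfolding a_def t_def using Mpos nu
      by (simp add: field_simps power2_eq_square)
    have "f (xstar + t *\<^sub>R u) = M + a" by (simp add: f.add f.scaleR fx a_def)
    then have "M + a \<le> M * norm (xstar + t *\<^sub>R u)" using fleM by metis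
    then have "(M + a)\<^sup>2 \<le> (M * norm (xstar + t *\<^sub>R u))\<^sup>2"
      using a0 Mpos by (intro power_mono) auto
    also have "\<dots> = M\<^sup>2 * (1 + t\<^sup>2 * (norm u)\<^sup>2)"
    proof -
      have u': "inner u xstar = 0" using u by (simp add: inner_commute)
      have "(norm (xstar + t *\<^sub>R u))\<^sup>2 = 1 + t\<^sup>2 * (norm u)\<^sup>2"
        unfolding power2_norm_eq_inner
        by (simp add: inner_add_left inner_add_right u u' ii power2_eq_square)
      then show ?thesis by (simp add: power_mult_distrib)
    qed
    also have "\<dots> = M\<^sup>2 + M * a"
      unfolding Ma t_def using Mpos nu by (simp add: field_simps power2_eq_square)
    finally show False using a0 Mpos by (simp add: power2_eq_square field_simps)
      (meson add_pos_pos mult_pos_pos not_le)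
 
  qed
  have orth: "f u = 0" if u: "inner xstar u = 0" for u
    using le[OF u] le[of "-u"] u by (simp add: f.neg)
  show ?thesis
  proof (intro exI allI)
    fix v
    define u where "u = v - inner xstar v *\<^sub>R xstar"
    have "inner xstar u = 0" unfolding u_def by (simp add: inner_diff_right ii)
    then have "f u = 0" by (rule orth)
    then have "f v = inner xstar v * M" unfolding u_def by (simp add: f.diff f.scaleR fx)
    then show "f v = inner (M *\<^sub>R xstar) v" by simp
  qed
qed

lemma dim0_sub:
  fixes S :: "'a::real_vector set"
  assumes "fd_subspace S" "dim S = 0" shows "S \<subseteq> {0}"
proof -
  obtain A where A: "finite A" "S = span A" using assms(1) unfolding fd_subspace_def by blast
  obtain B where B: "B \<subseteq> S" "independent B" "S \<subseteq> span B" "card B = dim S"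
    using basis_exists by blast
  have "finite B" using independent_span_bound[OF A(1) B(2)] B(1) A(2) by auto
  then have "B = {}" using B(4) assms(2) by simp
  then show ?thesis using B(3) by simp
qed

lemma sub0_dim:
  fixes S :: "'a::real_vector set"
  assumes "S \<subseteq> {0}" shows "dim S = 0"
  using dim_le_card[of S "{}"] assms by simp

lemma adjoint_surj:
  fixes B :: "'y::real_normed_vector \<Rightarrow> ('x::{real_inner,complete_space} \<Rightarrow>\<^sub>L real)"
    and J :: "'y \<Rightarrow> 'h::real_inner"
  assumes Bi: "bounded_linear (inv B)" and Bb: "bij B" and J: "bounded_linear J"
  shows "\<exists>x. \<forall>y. blinfun_apply (B y) x = inner w (J y)"
proof -
  let ?g = "\<lambda>z. inner w (J (inv B (blinfun_inner_left z)))"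
  have "bounded_linear ?g"
    by (intro bounded_linear_compose[OF bounded_linear_inner_right] bounded_linear_compose[OF J]
        bounded_linear_compose[OF Bi] bounded_linear_blinfun_inner_left)
  then obtain x where x: "\<And>z. ?g z = inner x z" using riesz_rep by blast
  show ?thesis
  proof (intro exI allI)
    fix y
    obtain z where z: "\<And>v. blinfun_apply (B y) v = inner z v"
      using riesz_rep[OF blinfun.bounded_linear_right] by blast
    have By: "B y = blinfun_inner_left z"
      by (rule blinfun_eqI) (simp add: z inner_commute)
    have "inner w (J y) = inner w (J (inv B (B y)))"
      using Bb by (simp add: bij_is_inj)
    also have "\<dots> = inner x z" using x By by simp
    also have "\<dots> = blinfun_apply (B y) x" by (simp add: z inner_commute)
    finally show "blinfun_apply (B y) x = inner w (J y)" by simp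
  qed
qed

lemma sq_bound:
  fixes x b c :: real
  assumes "0 \<le> x" "0 \<le> b" "0 < c" "c * x\<^sup>2 \<le> b\<^sup>2"
  shows "x \<le> (1 + 1 / c) * b"
proof (cases "x \<le> b")
  case True
  moreover have "b \<le> (1 + 1/c) * b" using assms by (simp add: algebra_simps)
  ultimately show ?thesis by linarith
next
  case False
  then have "b\<^sup>2 \<le> b * x" using assms by (simp add: power2_eq_square mult_left_mono)
  then have "c * x * x \<le> b * x" using assms(4) by (simp add: power2_eq_square mult.assoc)
  then have "c * x \<le> b" using False assms by (simp add: mult_le_cancel_right)
  then have "x \<le> b / c" using assms by (simp add: field_simps)
  moreover have "b / c \<le> (1 + 1/c) * b" using assms by (simp add: algebra_simps)
  ultimately show ?thesis by linarith
qed

lemma quad_bound: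
  fixes A E T cD a1 a2 a3 :: real
  assumes "A \<ge> 0" "E \<ge> 0" "T \<ge> 0" "cD > 0" "a1 \<ge> 0" "a2 \<ge> 0" "a3 \<ge> 0"
    and ineq: "A\<^sup>2 + cD * E\<^sup>2 \<le> a1 * T * A + a2 * T * E + a3 * T\<^sup>2"
  shows "A \<le> (1 + 2 * (a1 + a2 + a3) / min 1 cD) * T \<and> E \<le> (1 + 2 * (a1 + a2 + a3) / min 1 cD) * T"
proof -
  define m where "m = min 1 cD"
  define R where "R = A + E"
  define K where "K = 1 + 2 * (a1 + a2 + a3) / m"
  have m0: "m > 0" "m \<le> 1" "m \<le> cD" using assms unfolding m_def by auto
  have K1: "K \<ge> 1" unfolding K_def using m0 assms by simp
  have "m * (A\<^sup>2 + E\<^sup>2) \<le> A\<^sup>2 + cD * E\<^sup>2"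
  proof -
    have "m * A\<^sup>2 \<le> 1 * A\<^sup>2" by (rule mult_right_mono) (use m0 in auto)
    moreover have "m * E\<^sup>2 \<le> cD * E\<^sup>2" by (rule mult_right_mono) (use m0 in auto)
    ultimately show ?thesis by (simp add: distrib_left)
  qed
  also have "\<dots> \<le> (a1 + a2) * T * R + a3 * T\<^sup>2"
  proof -
    have "a1 * T * A \<le> a1 * T * R" "a2 * T * E \<le> a2 * T * R"
      unfolding R_def using assms by (simp_all add: mult_left_mono)
    then show ?thesis using ineq by (simp add: algebra_simps)
  qed
  finally have I: "m * (A\<^sup>2 + E\<^sup>2) \<le> (a1 + a2) * T * R + a3 * T\<^sup>2" .
  have RR: "R\<^sup>2 \<le> 2 * (A\<^sup>2 + E\<^sup>2)" unfolding R_def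
  proof -
    have "(A+E)\<^sup>2 = A\<^sup>2 + 2*A*E + E\<^sup>2" by (simp add: power2_sum)
    moreover have "(A-E)\<^sup>2 = A\<^sup>2 - 2*A*E + E\<^sup>2" by (simp add: power2_diff)
    moreover have "0 \<le> (A-E)\<^sup>2" by simp
    ultimately show "(A+E)\<^sup>2 \<le> 2 * (A\<^sup>2 + E\<^sup>2)" by (smt (verit))
  qed
  have RK: "R \<le> K * T"
  proof (cases "R \<le> T")
    case True
    have "1 * T \<le> K * T" by (rule mult_right_mono) (use K1 assms in auto)
    then show ?thesis using True by simp
  next
    case False
    have R0: "R > 0" using False assms by simp
    have "m * R\<^sup>2 \<le> m * (2 * (A\<^sup>2 + E\<^sup>2))" by (rule mult_left_mono[OF RR]) (use m0 in simp)
    moreover have "m * (2 * (A\<^sup>2 + E\<^sup>2)) = 2 * (m * (A\<^sup>2 + E\<^sup>2))" by simp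
    ultimately have "m * R\<^sup>2 / 2 \<le> (a1 + a2) * T * R + a3 * T\<^sup>2" using I by linarith
    also have "a3 * T\<^sup>2 \<le> a3 * T * R" using False assms
      by (simp add: power2_eq_square mult_left_mono mult.assoc)
    finally have "m * R * R / 2 \<le> (a1 + a2 + a3) * T * R"
      by (simp add: algebra_simps power2_eq_square)
    then have "(m * R / 2) * R \<le> ((a1 + a2 + a3) * T) * R"
      by (simp add: algebra_simps)
    then have "m * R / 2 \<le> (a1 + a2 + a3) * T" using mult_right_le_imp_le R0 by blast
    then have "R \<le> 2 * (a1 + a2 + a3) / m * T" using m0 by (simp add: field_simps)
    also have "\<dots> \<le> K * T" unfolding K_def using assms by (simp add: algebra_simps)
    finally show ?thesis .
  qed
  have "A \<le> R" "E \<le> R" unfolding R_def using assms by auto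
  then show ?thesis using RK unfolding K_def m_def by auto
qed

theorem mainTheorem5:
  fixes JX :: "'x::{real_inner,complete_space} \<Rightarrow> 'hx::{real_inner,complete_space}"
    and JY :: "'y::{real_inner,complete_space} \<Rightarrow> 'hy::{real_inner,complete_space}"
    and B :: "'y \<Rightarrow> ('x \<Rightarrow>\<^sub>L real)"
    and D :: "'y \<Rightarrow> ('y \<Rightarrow>\<^sub>L real)"
    and Yh :: "real \<Rightarrow> 'y set" and P :: "real \<Rightarrow> 'y \<Rightarrow> 'y"
    and Uh :: "real \<Rightarrow> ('x \<Rightarrow>\<^sub>L real) set" and Xh :: "real \<Rightarrow> 'x set"
    and Pi :: "real \<Rightarrow> 'x \<Rightarrow> 'x"
    and \<alpha> h0 c1 c2 cS cPi :: real
  assumes gelfX: "gelfand_embedding JX"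
    and gelfY: "gelfand_embedding JY"
    and B_lin: "bounded_linear B" and B_bij: "bij B" and Binv_lin: "bounded_linear (inv B)"
    and D_lin: "bounded_linear D"
    and D_sym: "\<And>y z. blinfun_apply (D y) z = blinfun_apply (D z) y"
    and D_ell: "\<exists>cD>0. \<forall>y. cD * (norm y)\<^sup>2 \<le> blinfun_apply (D y) y"
    and h0_pos: "h0 > 0" and \<alpha>_pos: "\<alpha> > 0"
    and c1_pos: "c1 > 0" and c2_pos: "c2 > 0" and cS_pos: "cS > 0" and cPi_pos: "cPi > 0"
    and Yh_fd: "\<And>h. 0 < h \<Longrightarrow> h \<le> h0 \<Longrightarrow> fd_subspace (Yh h)"
    and P_in: "\<And>h y. 0 < h \<Longrightarrow> h \<le> h0 \<Longrightarrow> P h y \<in> Yh h"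
    and P_HY: "\<And>h y. 0 < h \<Longrightarrow> h \<le> h0 \<Longrightarrow>
                 norm (JY (y - P h y)) \<le> c1 * h powr \<alpha> * Dnorm D y"
    and P_D: "\<And>h y. 0 < h \<Longrightarrow> h \<le> h0 \<Longrightarrow> Dnorm D (y - P h y) \<le> c2 * Dnorm D y"
    and Uh_fd: "\<And>h. 0 < h \<Longrightarrow> h \<le> h0 \<Longrightarrow> fd_subspace (Uh h)"
    and Xh_fd: "\<And>h. 0 < h \<Longrightarrow> h \<le> h0 \<Longrightarrow> fd_subspace (Xh h)"
    and dim_eq: "\<And>h. 0 < h \<Longrightarrow> h \<le> h0 \<Longrightarrow> dim (Uh h) = dim (Xh h)"
    and infsup: "\<And>h u. 0 < h \<Longrightarrow> h \<le> h0 \<Longrightarrow> u \<in> Uh h \<Longrightarrow> u \<noteq> 0 \<Longrightarrow>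
                 cS * norm u \<le> (SUP x\<in>Xh h - {0}. blinfun_apply u x / norm x)"
    and Pi_in: "\<And>h x. 0 < h \<Longrightarrow> h \<le> h0 \<Longrightarrow> Pi h x \<in> Xh h"
    and Pi_approx: "\<And>h x w. 0 < h \<Longrightarrow> h \<le> h0 \<Longrightarrow>
                 (\<forall>y. blinfun_apply (B y) x = inner w (JY y)) \<Longrightarrow>
                 norm (x - Pi h x) \<le> cPi * h powr \<alpha> * norm w"
  shows "\<exists>c>0. \<forall>h ybar y\<rho>h ut.
           0 < h \<and> h \<le> h0 \<and>
           y\<rho>h \<in> Yh h \<and>
           (\<forall>z\<in>Yh h. inner (JY y\<rho>h) (JY z) + h powr (2 * \<alpha>) * blinfun_apply (D y\<rho>h) z
                        = inner ybar (JY z)) \<and>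
           ut \<in> Uh h \<and>
           (\<forall>x\<in>Xh h. blinfun_apply ut x = blinfun_apply (B y\<rho>h) x)
           \<longrightarrow> norm (JY (inv B ut) - ybar) \<le> c * norm ybar \<and>
               (\<forall>yb. ybar = JY yb \<longrightarrow> norm (JY (inv B ut) - ybar) \<le> c * h powr \<alpha> * norm yb)"
proof -
  have JY_bl: "bounded_linear JY" using gelfY unfolding gelfand_embedding_def by blast
  interpret JYl: bounded_linear JY by (rule JY_bl)
  interpret Bl: bounded_linear B by (rule B_lin)
  interpret Dl: bounded_linear D by (rule D_lin)
  obtain cD where cD: "cD > 0" "\<And>y. cD * (norm y)\<^sup>2 \<le> blinfun_apply (D y) y" using D_ell by blast
  obtain KD where KD: "\<And>y. norm (D y) \<le> norm y * KD" "KD > 0" using Dl.pos_bounded by blast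
  obtain KB where KB: "\<And>y. norm (B y) \<le> norm y * KB" "KB > 0" using Bl.pos_bounded by blast
  have Dbd: "\<bar>blinfun_apply (D y) z\<bar> \<le> KD * norm y * norm z" for y z
  proof -
    have "\<bar>blinfun_apply (D y) z\<bar> \<le> norm (D y) * norm z" using norm_blinfun[of "D y" z] by simp
    also have "\<dots> \<le> (norm y * KD) * norm z" by (rule mult_right_mono[OF KD(1)]) simp
    finally show ?thesis by (simp add: mult_ac)
  qed
  have Dnn: "0 \<le> blinfun_apply (D y) y" for y
  proof -
    have "0 \<le> cD * (norm y)\<^sup>2" using cD(1) by simp
    then show ?thesis using cD(2)[of y] by linarith
  qed
  define sK where "sK = sqrt KD"
  have sK0: "sK \<ge> 0" unfolding sK_def using KD by simp
  have Dn_up: "Dnorm D y \<le> sK * norm y" for y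
  proof -
    have "blinfun_apply (D y) y \<le> KD * (norm y)\<^sup>2" using Dbd[of y y] by (simp add: power2_eq_square)
    then have "Dnorm D y \<le> sqrt (KD * (norm y)\<^sup>2)" unfolding Dnorm_def by (rule real_sqrt_le_mono)
    also have "\<dots> = sK * norm y" by (simp add: sK_def real_sqrt_mult)
    finally show ?thesis .
  qed
  have Dn_sq: "(Dnorm D y)\<^sup>2 = blinfun_apply (D y) y" for y
    unfolding Dnorm_def using Dnn[of y] by simp
  have Dn_nn: "Dnorm D y \<ge> 0" for y by (simp add: Dnorm_def Dnn)
  define Cq where "Cq = cPi * (KB / cS + KB)"
  define k1 where "k1 = c1 * sK"
  define k2 where "k2 = (1 + 1/cD) * (c2 * sK)"
  define a1 where "a1 = k1"
  define a2 where "a2 = KD + KD * k2"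
  define a3 where "a3 = KD * k2"
  define K where "K = 1 + 2 * (a1 + a2 + a3) / min 1 cD"
  define C1 where "C1 = Cq * (1 + 1/cD) + 2"
  define C2 where "C2 = Cq * (K + 1) + K"
  have Cq0: "Cq \<ge> 0" unfolding Cq_def using cPi_pos KB(2) cS_pos by simp
  have k10: "k1 \<ge> 0" unfolding k1_def using c1_pos sK0 by simp
  have k20: "k2 \<ge> 0" unfolding k2_def using c2_pos sK0 cD(1) by simp
  have acoef0: "a1 \<ge> 0" "a2 \<ge> 0" "a3 \<ge> 0" unfolding a1_def a2_def a3_def using k10 k20 KD(2) by auto
  have K0: "K \<ge> 0" unfolding K_def using acoef0 cD(1) by simp
  have "Cq * (1 + 1/cD) \<ge> 0" using Cq0 cD(1) by simp
  then have C10: "C1 > 0" unfolding C1_def by linarith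
  have C20: "C2 \<ge> 0" unfolding C2_def using Cq0 K0 by simp
  show ?thesis
  proof (rule exI[of _ "C1 + C2"], intro conjI allI impI)
    show "C1 + C2 > 0" using C10 C20 by simp
    fix h ybar yrh ut
    assume H: "0 < h \<and> h \<le> h0 \<and> yrh \<in> Yh h \<and>
           (\<forall>z\<in>Yh h. inner (JY yrh) (JY z) + h powr (2 * \<alpha>) * blinfun_apply (D yrh) z
                        = inner ybar (JY z)) \<and>
           ut \<in> Uh h \<and>
           (\<forall>x\<in>Xh h. blinfun_apply ut x = blinfun_apply (B yrh) x)"
    then have h: "0 < h" "h \<le> h0" and yin: "yrh \<in> Yh h"
      and gal0: "\<And>z. z \<in> Yh h \<Longrightarrow> inner (JY yrh) (JY z) + h powr (2 * \<alpha>) * blinfun_apply (D yrh) z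
                        = inner ybar (JY z)"
      and uin: "ut \<in> Uh h" and ueq: "\<And>x. x \<in> Xh h \<Longrightarrow> blinfun_apply ut x = blinfun_apply (B yrh) x"
      by auto
    define s where "s = h powr \<alpha>"
    have s0: "s > 0" unfolding s_def using h by simp
    have rho: "h powr (2 * \<alpha>) = s\<^sup>2"
    proof -
      have "2 * \<alpha> = \<alpha> + \<alpha>" by simp
      then have "h powr (2 * \<alpha>) = h powr (\<alpha> + \<alpha>)" by (rule arg_cong)
      also have "\<dots> = s * s" unfolding s_def by (rule powr_add)
      also have "\<dots> = s\<^sup>2" by (rule power2_eq_square[symmetric])
      finally show ?thesis .
    qed
    have gal: "\<And>z. z \<in> Yh h \<Longrightarrow> inner (JY yrh) (JY z) + s\<^sup>2 * blinfun_apply (D yrh) z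
                        = inner ybar (JY z)" using gal0 rho by simp
    have ut_bd: "norm ut \<le> KB / cS * norm yrh"
    proof (cases "ut = 0")
      case True then show ?thesis using KB(2) cS_pos by simp
    next
      case False
      have "\<not> Uh h \<subseteq> {0}" using uin False by auto
      have "dim (Uh h) \<noteq> 0"
      proof
        assume "dim (Uh h) = 0"
        then have "Uh h \<subseteq> {0}" by (rule dim0_sub[OF Uh_fd[OF h]])
        with \<open>\<not> Uh h \<subseteq> {0}\<close> show False by blast
      qed
      then have "dim (Xh h) \<noteq> 0" using dim_eq[OF h] by simp
      have "\<not> Xh h \<subseteq> {0}"
      proof
        assume "Xh h \<subseteq> {0}"
        then have "dim (Xh h) = 0" by (rule sub0_dim)
        with \<open>dim (Xh h) \<noteq> 0\<close> show False by simp
      qed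
      then obtain x0 where x0: "x0 \<in> Xh h" "x0 \<noteq> 0" by auto
      have "cS * norm ut \<le> (SUP x\<in>Xh h - {0}. blinfun_apply ut x / norm x)"
        using infsup[OF h uin False] .
      also have "\<dots> \<le> KB * norm yrh"
      proof (rule cSUP_least)
        show "Xh h - {0} \<noteq> {}" using x0 by auto
        fix x assume x: "x \<in> Xh h - {0}"
        have "blinfun_apply ut x = blinfun_apply (B yrh) x" using ueq x by auto
        also have "\<dots> \<le> norm (B yrh) * norm x" using norm_blinfun[of "B yrh" x] by simp
        also have "\<dots> \<le> (norm yrh * KB) * norm x" by (rule mult_right_mono[OF KB(1)]) simp
        finally have "blinfun_apply ut x \<le> (KB * norm yrh) * norm x" by (simp add: mult_ac)
        then show "blinfun_apply ut x / norm x \<le> KB * norm yrh" using x by (simp add: divide_le_eq)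
      qed
      finally have "norm ut * cS \<le> KB * norm yrh" by (simp add: mult.commute)
      then have "norm ut \<le> (KB * norm yrh) / cS" using pos_le_divide_eq[OF cS_pos] by blast
      then show ?thesis by simp
    qed
    define e' where "e' = inv B ut - yrh"
    define w where "w = JY e'"
    have w_bd: "norm w \<le> Cq * (s * norm yrh)"
    proof -
      obtain x where x: "\<And>y. blinfun_apply (B y) x = inner w (JY y)"
        using adjoint_surj[OF Binv_lin B_bij JY_bl] by blast
      have pix: "norm (x - Pi h x) \<le> cPi * s * norm w" using Pi_approx[OF h] x unfolding s_def by blast
      have Be: "B e' = ut - B yrh" unfolding e'_def using B_bij
        by (simp add: Bl.diff bij_is_surj surj_f_inv_f)
      have piz: "blinfun_apply (ut - B yrh) (Pi h x) = 0"
        using ueq[OF Pi_in[OF h]] by (simp add: blinfun.diff_left)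
      have nub: "norm (ut - B yrh) \<le> (KB / cS + KB) * norm yrh"
      proof -
        have "norm (ut - B yrh) \<le> norm ut + norm (B yrh)" by (rule norm_triangle_ineq4)
        also have "\<dots> \<le> KB / cS * norm yrh + norm yrh * KB" using ut_bd KB(1)[of yrh] by linarith
        finally show ?thesis by (simp add: algebra_simps)
      qed
      have "(norm w)\<^sup>2 = inner w (JY e')" by (simp add: w_def power2_norm_eq_inner)
      also have "\<dots> = blinfun_apply (B e') x" using x by simp
      also have "\<dots> = blinfun_apply (ut - B yrh) (x - Pi h x)"
        using piz by (simp add: Be blinfun.diff_right)
      also have "\<dots> \<le> norm (ut - B yrh) * norm (x - Pi h x)"
        using norm_blinfun[of "ut - B yrh" "x - Pi h x"] by simp
      also have "\<dots> \<le> ((KB / cS + KB) * norm yrh) * (cPi * s * norm w)"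
        by (rule mult_mono[OF nub pix]) (use cPi_pos s0 KB(2) cS_pos in simp_all)
      also have "\<dots> = (Cq * (s * norm yrh)) * norm w" unfolding Cq_def by (simp add: mult_ac)
      finally have I: "norm w * norm w \<le> (Cq * (s * norm yrh)) * norm w" by (simp add: power2_eq_square)
      show ?thesis
      proof (cases "norm w = 0")
        case True then show ?thesis using Cq0 s0 by simp
      next
        case False then have "norm w > 0" by simp
        with I show ?thesis using mult_right_le_imp_le by blast
      qed
    qed
    have Jut: "JY (inv B ut) = w + JY yrh" unfolding w_def e'_def by (simp add: JYl.diff)
    define a where "a = norm (JY yrh)"
    define b where "b = norm ybar"
    define x where "x = s * norm yrh"
    have a0: "a \<ge> 0" and b0: "b \<ge> 0" and x0: "x \<ge> 0" unfolding a_def b_def x_def using s0 by auto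
    have g1: "a\<^sup>2 + s\<^sup>2 * blinfun_apply (D yrh) yrh = inner ybar (JY yrh)"
      using gal[OF yin] unfolding a_def by (simp add: power2_norm_eq_inner)
    have "inner ybar (JY yrh) \<le> b * a" unfolding a_def b_def using Cauchy_Schwarz_ineq2[of ybar "JY yrh"] by simp
    moreover have cx: "cD * x\<^sup>2 \<le> s\<^sup>2 * blinfun_apply (D yrh) yrh"
    proof -
      have "s\<^sup>2 * (cD * (norm yrh)\<^sup>2) \<le> s\<^sup>2 * blinfun_apply (D yrh) yrh"
        by (rule mult_left_mono[OF cD(2)]) simp
      then show ?thesis unfolding x_def by (simp add: power_mult_distrib mult_ac)
    qed
    moreover have "0 \<le> cD * x\<^sup>2" using cD by simp
    ultimately have ab: "a\<^sup>2 + cD * x\<^sup>2 \<le> b * a" using g1 by linarith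
    have ale: "a \<le> b"
    proof (rule ccontr)
      assume "\<not> a \<le> b"
      then have "b * a < a * a" using b0 by (intro mult_strict_right_mono) auto
      then show False using ab \<open>0 \<le> cD * x\<^sup>2\<close> by (simp add: power2_eq_square)
    qed
    have "b * a \<le> b * b" using ale b0 by (simp add: mult_left_mono)
    then have "cD * x\<^sup>2 \<le> b * b" using ab zero_le_power2[of a] by linarith
    then have "cD * x\<^sup>2 \<le> b\<^sup>2" by (simp add: power2_eq_square)
    then have xb: "x \<le> (1 + 1/cD) * b" using sq_bound x0 b0 cD(1) by blast
    have part1: "norm (JY (inv B ut) - ybar) \<le> (C1 + C2) * norm ybar"
    proof -
      have "norm (JY (inv B ut) - ybar) = norm (w + (JY yrh - ybar))" by (simp add: Jut algebra_simps)
      also have "\<dots> \<le> norm w + norm (JY yrh - ybar)" by (rule norm_triangle_ineq)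
      also have "norm (JY yrh - ybar) \<le> a + b" unfolding a_def b_def by (rule norm_triangle_ineq4)
      also have "norm w \<le> Cq * x" using w_bd unfolding x_def .
      also have "Cq * x \<le> Cq * ((1 + 1/cD) * b)" using xb Cq0 by (rule mult_left_mono)
      finally have "norm (JY (inv B ut) - ybar) \<le> Cq * ((1 + 1/cD) * b) + (a + b)" by simp
      also have "\<dots> \<le> C1 * b" unfolding C1_def using ale by (simp add: algebra_simps)
      also have "\<dots> \<le> (C1 + C2) * b" using C20 b0 by (simp add: algebra_simps)
      finally show ?thesis unfolding b_def .
    qed
    show "norm (JY (inv B ut) - ybar) \<le> (C1 + C2) * norm ybar" by (rule part1)
    fix yb assume ybar: "ybar = JY yb"
    have Ysub: "subspace (Yh h)" using Yh_fd[OF h] unfolding fd_subspace_def by blast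
    define T where "T = s * norm yb"
    define p where "p = P h yb"
    define q where "q = yb - p"
    define e where "e = yrh - yb"
    define z0 where "z0 = yrh - p"
    define A where "A = norm (JY e)"
    define E where "E = s * norm e"
    have T0: "T \<ge> 0" and A0: "A \<ge> 0" and E0: "E \<ge> 0" unfolding T_def A_def E_def using s0 by auto
    have z0in: "z0 \<in> Yh h" unfolding z0_def p_def using Ysub yin P_in[OF h] by (simp add: subspace_diff)
    have e_eq: "e = z0 - q" unfolding e_def z0_def q_def by simp
    have z0_eq: "z0 = e + q" unfolding e_def z0_def q_def by simp
    have Jq: "norm (JY q) \<le> k1 * T"
    proof -
      have "norm (JY q) \<le> c1 * s * Dnorm D yb" using P_HY[OF h, of yb] unfolding q_def p_def s_def .
      also have "\<dots> \<le> c1 * s * (sK * norm yb)" by (rule mult_left_mono[OF Dn_up]) (use c1_pos s0 in simp)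
      finally show ?thesis unfolding k1_def T_def by (simp add: mult_ac)
    qed
    have nq: "norm q \<le> k2 * norm yb"
    proof -
      have "cD * (norm q)\<^sup>2 \<le> (Dnorm D q)\<^sup>2" using cD(2)[of q] Dn_sq[of q] by simp
      also have "\<dots> \<le> (c2 * Dnorm D yb)\<^sup>2"
        by (rule power_mono) (use P_D[OF h, of yb] Dn_nn[of q] in \<open>simp_all add: q_def p_def\<close>)
      also have "\<dots> \<le> (c2 * (sK * norm yb))\<^sup>2"
        by (rule power_mono) (use Dn_up[of yb] c2_pos Dn_nn[of yb] in \<open>simp_all add: mult_left_mono\<close>)
      finally have "norm q \<le> (1 + 1/cD) * (c2 * (sK * norm yb))"
        using sq_bound[of "norm q" "c2 * (sK * norm yb)" cD] c2_pos sK0 cD(1) by simp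
      then show ?thesis unfolding k2_def by (simp add: mult_ac)
    qed
    have gerr: "inner (JY e) (JY z) + s\<^sup>2 * blinfun_apply (D e) z = - (s\<^sup>2 * blinfun_apply (D yb) z)"
      if z: "z \<in> Yh h" for z
    proof -
      have "inner (JY yrh) (JY z) + s\<^sup>2 * blinfun_apply (D yrh) z = inner (JY yb) (JY z)"
        using gal[OF z] ybar by simp
      then show ?thesis unfolding e_def
        by (simp add: JYl.diff Dl.diff blinfun.diff_left inner_diff_left algebra_simps)
    qed
    have energy: "A\<^sup>2 + s\<^sup>2 * blinfun_apply (D e) e
        = - (s\<^sup>2 * blinfun_apply (D yb) z0) - inner (JY e) (JY q) - s\<^sup>2 * blinfun_apply (D e) q"
    proof -
      have "A\<^sup>2 = inner (JY e) (JY z0) - inner (JY e) (JY q)"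
        unfolding A_def power2_norm_eq_inner
        by (subst (2) e_eq) (simp add: JYl.diff inner_diff_right)
      moreover have "blinfun_apply (D e) e = blinfun_apply (D e) z0 - blinfun_apply (D e) q"
        by (subst (2) e_eq) (simp add: blinfun.diff_right)
      then have "s\<^sup>2 * blinfun_apply (D e) e = s\<^sup>2 * blinfun_apply (D e) z0 - s\<^sup>2 * blinfun_apply (D e) q"
        by (simp add: right_diff_distrib)
      ultimately show ?thesis using gerr[OF z0in] by linarith
    qed
    have lhs: "A\<^sup>2 + cD * E\<^sup>2 \<le> A\<^sup>2 + s\<^sup>2 * blinfun_apply (D e) e"
    proof -
      have "s\<^sup>2 * (cD * (norm e)\<^sup>2) \<le> s\<^sup>2 * blinfun_apply (D e) e"
        by (rule mult_left_mono[OF cD(2)]) simp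
      then show ?thesis unfolding E_def by (simp add: power_mult_distrib mult_ac)
    qed
    have r1: "- (s\<^sup>2 * blinfun_apply (D yb) z0) \<le> KD * T * E + KD * k2 * T\<^sup>2"
    proof -
      have "- blinfun_apply (D yb) z0 \<le> KD * norm yb * norm z0" using Dbd[of yb z0] by linarith
      also have "\<dots> \<le> KD * norm yb * (norm e + k2 * norm yb)"
      proof (rule mult_left_mono)
        show "norm z0 \<le> norm e + k2 * norm yb" using norm_triangle_ineq[of e q] nq z0_eq by simp
      qed (use KD(2) in simp)
      finally have "s\<^sup>2 * (- blinfun_apply (D yb) z0) \<le> s\<^sup>2 * (KD * norm yb * (norm e + k2 * norm yb))"
        by (rule mult_left_mono) simp
      then show ?thesis unfolding T_def E_def by (simp add: power2_eq_square algebra_simps)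
    qed
    have r2: "- inner (JY e) (JY q) \<le> k1 * T * A"
    proof -
      have "- inner (JY e) (JY q) \<le> A * norm (JY q)"
        using Cauchy_Schwarz_ineq2[of "JY e" "JY q"] unfolding A_def by linarith
      also have "\<dots> \<le> A * (k1 * T)" by (rule mult_left_mono[OF Jq A0])
      finally show ?thesis by (simp add: mult_ac)
    qed
    have r3: "- (s\<^sup>2 * blinfun_apply (D e) q) \<le> KD * k2 * T * E"
    proof -
      have "- blinfun_apply (D e) q \<le> KD * norm e * norm q" using Dbd[of e q] by linarith
      also have "\<dots> \<le> KD * norm e * (k2 * norm yb)"
        by (rule mult_left_mono[OF nq]) (use KD(2) in simp)
      finally have "s\<^sup>2 * (- blinfun_apply (D e) q) \<le> s\<^sup>2 * (KD * norm e * (k2 * norm yb))"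
        by (rule mult_left_mono) simp
      then show ?thesis unfolding T_def E_def by (simp add: power2_eq_square algebra_simps)
    qed
    have "A\<^sup>2 + cD * E\<^sup>2 \<le> a1 * T * A + a2 * T * E + a3 * T\<^sup>2"
    proof -
      have "A\<^sup>2 + cD * E\<^sup>2 \<le> KD * T * E + KD * k2 * T\<^sup>2 + k1 * T * A + KD * k2 * T * E"
        using lhs energy r1 r2 r3 by linarith
      then show ?thesis unfolding a1_def a2_def a3_def by (simp add: algebra_simps)
    qed
    from quad_bound[OF A0 E0 T0 cD(1) acoef0 this]
    have AK: "A \<le> K * T" and EK: "E \<le> K * T" unfolding K_def by auto
    have xT: "s * norm yrh \<le> (K + 1) * T"
    proof -
      have "norm yrh \<le> norm e + norm yb" unfolding e_def using norm_triangle_ineq[of "yrh - yb" yb] by simp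
      then have "s * norm yrh \<le> s * (norm e + norm yb)" using s0 by (simp add: mult_left_mono)
      also have "\<dots> = E + T" unfolding E_def T_def by (simp add: algebra_simps)
      finally show ?thesis using EK by (simp add: algebra_simps)
    qed
    have "norm (JY (inv B ut) - ybar) = norm (w + JY e)" unfolding e_def
      by (simp add: Jut ybar JYl.diff algebra_simps)
    also have "\<dots> \<le> norm w + A" unfolding A_def by (rule norm_triangle_ineq)
    also have "\<dots> \<le> Cq * ((K + 1) * T) + K * T"
      using w_bd mult_left_mono[OF xT Cq0] AK by linarith
    also have "\<dots> = C2 * T" unfolding C2_def by (simp add: algebra_simps)
    also have "\<dots> \<le> (C1 + C2) * T" using C10 T0 by (simp add: mult_right_mono)
    finally show "norm (JY (inv B ut) - ybar) \<le> (C1 + C2) * h powr \<alpha> * norm yb"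
      unfolding T_def s_def by (simp add: mult_ac)
  qed
qed

end
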